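(* Let $(\Omega,\mathcal{A},\mu)$ be a measure space and $F:\mathbb{R}^m\rightrightarrows\mathbb{R}^n$ a set-valued map. Let $(x_k)$, $(y_k)$ be sequences of measurable functions such that $x_k\to x$ $\mu$-almost everywhere for some function $x:\Omega\to\mathbb{R}^m$, $y_k\rightharpoonup y$ weakly in $L^1(\mu;\mathbb{R}^n)$, and $y_k(t)\in F(x_k(t))$ for $\mu$-almost all $t\in\Omega$. Then $y(t)\in(\operatorname{conv}^\infty F)(x(t))$ for $\mu$-almost all $t\in\Omega$.
   Context: For sets $A_k\subset\mathbb{R}^n$, the outer limit is $\limsup_{k\to\infty}A_k:=\{y:\ \exists$ a subsequence $k_j$ and $y_{k_j}\in A_{k_j}$ with $y_{k_j}\to y\}$. For $U\subset\mathbb{R}^m$, $F(U):=\bigcup_{x'\in U}F(x')$; $\operatorname{conv}$ denotes convex hull; $B_r(0)$ is the open ball of radius $r$. Define $(\operatorname{conv}^\infty F)(x):=\limsup_{k\to\infty}\operatorname{conv}\big(F(x+B_{1/k}(0))\big)$. *)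

theory Defs
  imports "HOL-Analysis.Analysis"
begin

definition outer_limit :: "(nat \<Rightarrow> 'a::topological_space set) \<Rightarrow> 'a set" where
  "outer_limit A = {y. \<exists>r z. strict_mono r \<and> (\<forall>j. z j \<in> A (r j)) \<and> z \<longlonglongrightarrow> y}"

text \<open>(conv^infty F)(x) = limsup_k conv(F(x + B_{1/k}(0))), k = 1,2,...
  (indexed by Suc k to avoid k = 0; the outer limit is shift invariant).\<close>
definition conv_inf :: "('m::euclidean_space \<Rightarrow> 'n::euclidean_space set) \<Rightarrow> 'm \<Rightarrow> 'n set" where
  "conv_inf F x = outer_limit (\<lambda>k. convex hull (\<Union> (F ` ball x (1 / real (Suc k)))))"

definition L1_dual :: "'a measure \<Rightarrow> (('a \<Rightarrow> 'b::euclidean_space) \<Rightarrow> real) set" where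
  "L1_dual M = {\<phi>.
     (\<forall>f g. integrable M f \<longrightarrow> integrable M g \<longrightarrow> \<phi> (\<lambda>t. f t + g t) = \<phi> f + \<phi> g) \<and>
     (\<forall>c f. integrable M f \<longrightarrow> \<phi> (\<lambda>t. c *\<^sub>R f t) = c * \<phi> f) \<and>
     (\<exists>C. \<forall>f. integrable M f \<longrightarrow> \<bar>\<phi> f\<bar> \<le> C * (\<integral>t. norm (f t) \<partial>M))}"

definition weak_L1_conv :: "'a measure \<Rightarrow> (nat \<Rightarrow> 'a \<Rightarrow> 'b::euclidean_space) \<Rightarrow> ('a \<Rightarrow> 'b) \<Rightarrow> bool" where
  "weak_L1_conv M ys y \<longleftrightarrow> (\<forall>k. integrable M (ys k)) \<and> integrable M y \<and>
     (\<forall>\<phi>\<in>L1_dual M. (\<lambda>k. \<phi> (ys k)) \<longlonglongrightarrow> \<phi> y)"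

end

theory Submission imports Defs begin

definition nth0 :: "rat list \<Rightarrow> nat \<Rightarrow> rat" where
  "nth0 ls i = (if i < length ls then ls!i else 0)"
definition cw :: "rat list \<Rightarrow> (nat \<Rightarrow> 'n::real_vector) \<Rightarrow> 'n" where
  "cw ls f = (\<Sum>i<length ls. real_of_rat (ls!i) *\<^sub>R f i)"
definition Lw :: "rat list set" where
  "Lw = {ls. (\<forall>q\<in>set ls. 0 \<le> q) \<and> sum_list ls = 1}"
definition KK :: "(nat \<Rightarrow> 'n::real_vector) \<Rightarrow> 'n set" where
  "KK f = (\<lambda>ls. cw ls f) ` Lw"

lemma cw_pad:
  assumes "length ls \<le> n"
  shows "cw ls f = (\<Sum>i<n. real_of_rat (nth0 ls i) *\<^sub>R f i)"
proof -
  have "(\<Sum>i<n. real_of_rat (nth0 ls i) *\<^sub>R f i) = (\<Sum>i<length ls. real_of_rat (nth0 ls i) *\<^sub>R f i)"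
    by (rule sum.mono_neutral_right) (use assms in \<open>auto simp: nth0_def\<close>)
  also have "\<dots> = cw ls f" unfolding cw_def by (rule sum.cong) (auto simp: nth0_def)
  finally show ?thesis by simp
qed

lemma sum_list_pad:
  assumes "length ls \<le> n"
  shows "sum_list ls = (\<Sum>i<n. nth0 ls i)"
proof -
  have "(\<Sum>i<n. nth0 ls i) = (\<Sum>i<length ls. nth0 ls i)"
    by (rule sum.mono_neutral_right) (use assms in \<open>auto simp: nth0_def\<close>)
  also have "\<dots> = sum_list ls" by (simp add: sum_list_sum_nth nth0_def atLeast0LessThan)
  finally show ?thesis by simp
qed

lemma nth0_nonneg: "ls \<in> Lw \<Longrightarrow> 0 \<le> nth0 ls i"
  by (auto simp: nth0_def Lw_def)

lemma KK_unit: "f i \<in> KK f"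
proof -
  let ?ls = "replicate i (0::rat) @ [1]"
  have "?ls \<in> Lw" by (auto simp: Lw_def sum_list_replicate)
  moreover have "cw ?ls f = f i"
  proof -
    have "cw ?ls f = (\<Sum>j<Suc i. real_of_rat (?ls!j) *\<^sub>R f j)" by (simp add: cw_def)
    also have "\<dots> = f i"
      by (simp add: nth_append)
    finally show ?thesis .
  qed
  ultimately show ?thesis unfolding KK_def by (metis image_eqI)
qed

lemma KK_ne: "KK f \<noteq> {}" using KK_unit by blast

lemma KK_hull: "KK f \<subseteq> convex hull (range f)"
proof
  fix z assume "z \<in> KK f"
  then obtain ls where ls: "ls \<in> Lw" "z = cw ls f" by (auto simp: KK_def)
  have "(\<Sum>j<length ls. real_of_rat (nth0 ls j) *\<^sub>R f j) \<in> convex hull (range f)"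
  proof (rule convex_sum)
    show "(\<Sum>i<length ls. real_of_rat (nth0 ls i)) = 1"
      using sum_list_pad[of ls "length ls"] ls(1) by (simp add: Lw_def flip: of_rat_sum)
  qed (use ls nth0_nonneg in \<open>auto intro: hull_subset[THEN subsetD]\<close>)
  then show "z \<in> convex hull (range f)" using ls cw_pad[of ls "length ls" f] by simp
qed

definition comb :: "rat \<Rightarrow> rat list \<Rightarrow> rat list \<Rightarrow> rat list" where
  "comb u l1 l2 = map (\<lambda>i. u * nth0 l1 i + (1-u) * nth0 l2 i) [0..<max (length l1) (length l2)]"

lemma nth0_comb: "nth0 (comb u l1 l2) i = u * nth0 l1 i + (1-u) * nth0 l2 i"
  by (auto simp: comb_def nth0_def)

lemma KK_ratconvex:
  assumes "a \<in> KK f" "b \<in> KK f" "0 \<le> u" "u \<le> 1"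
  shows "real_of_rat u *\<^sub>R a + (1 - real_of_rat u) *\<^sub>R b \<in> KK f"
proof -
  obtain l1 l2 where l: "l1 \<in> Lw" "l2 \<in> Lw" "a = cw l1 f" "b = cw l2 f"
    using assms by (auto simp: KK_def)
  let ?n = "max (length l1) (length l2)"
  let ?l = "comb u l1 l2"
  have len: "length ?l = ?n" by (simp add: comb_def)
  have "?l \<in> Lw"
  proof -
    have "\<forall>q\<in>set ?l. 0 \<le> q"
      using assms(3,4) l(1,2) nth0_nonneg by (auto simp: comb_def)
    moreover have "sum_list ?l = 1"
    proof -
      have "sum_list ?l = (\<Sum>i<?n. u * nth0 l1 i + (1-u) * nth0 l2 i)"
        using sum_list_pad[of ?l ?n] len by (simp add: nth0_comb)
      also have "\<dots> = u * sum_list l1 + (1-u) * sum_list l2"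
        by (simp add: sum.distrib sum_distrib_left sum_list_pad[of l1 ?n] sum_list_pad[of l2 ?n])
      finally show ?thesis using l(1,2) by (simp add: Lw_def)
    qed
    ultimately show ?thesis by (simp add: Lw_def)
  qed
  moreover have "cw ?l f = real_of_rat u *\<^sub>R a + (1 - real_of_rat u) *\<^sub>R b"
  proof -
    have "cw ?l f = (\<Sum>i<?n. real_of_rat (u * nth0 l1 i + (1-u) * nth0 l2 i) *\<^sub>R f i)"
      using cw_pad[of ?l ?n] len by (simp add: nth0_comb)
    also have "\<dots> = real_of_rat u *\<^sub>R (\<Sum>i<?n. real_of_rat (nth0 l1 i) *\<^sub>R f i)
                    + (1 - real_of_rat u) *\<^sub>R (\<Sum>i<?n. real_of_rat (nth0 l2 i) *\<^sub>R f i)"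
      by (simp add: of_rat_add of_rat_mult of_rat_diff scaleR_add_left sum.distrib scaleR_sum_right)
    also have "\<dots> = real_of_rat u *\<^sub>R a + (1 - real_of_rat u) *\<^sub>R b"
      using l by (simp add: cw_pad[of l1 ?n] cw_pad[of l2 ?n])
    finally show ?thesis .
  qed
  ultimately show ?thesis unfolding KK_def by (metis image_eqI)
qed

lemma rat01_closure:
  fixes x :: real assumes x: "0 \<le> x" "x \<le> 1"
  shows "x \<in> closure (real_of_rat ` {u. 0 \<le> u \<and> u \<le> 1})"
  unfolding closure_approachable
proof (intro allI impI)
  fix e :: real assume e: "e > 0"
  show "\<exists>y\<in>real_of_rat ` {u. 0 \<le> u \<and> u \<le> 1}. dist y x < e"
  proof (cases "x \<le> 1/2")
    case True
    obtain r where r: "r \<in> \<rat>" "x < r" "r < x + min e (1/2)"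
      using Rats_dense_in_real[of x "x + min e (1/2)"] e by auto
    then obtain u where u: "r = of_rat u" by (auto elim: Rats_cases)
    have "0 \<le> u" "u \<le> 1" using r u x True
      by (metis min.cobounded2 less_eq_real_def order.strict_trans1 zero_le_of_rat_iff add_le_cancel_left,
          smt (verit) of_rat_le_1_iff field_sum_of_halves min.cobounded2)
    then show ?thesis using r u by (intro bexI[of _ r]) (auto simp: dist_real_def)
  next
    case False
    obtain r where r: "r \<in> \<rat>" "x - min e (1/2) < r" "r < x"
      using Rats_dense_in_real[of "x - min e (1/2)" x] e by auto
    then obtain u where u: "r = of_rat u" by (auto elim: Rats_cases)
    have "0 \<le> u" "u \<le> 1" using r u x False
      by (smt (verit) zero_le_of_rat_iff min.cobounded2 field_sum_of_halves,
          smt (verit) of_rat_le_1_iff)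
    then show ?thesis using r u by (intro bexI[of _ r]) (auto simp: dist_real_def)
  qed
qed

lemma KK_closure_convex:
  fixes f :: "nat \<Rightarrow> 'n::euclidean_space"
  shows "convex (closure (KK f))"
proof -
  let ?R = "real_of_rat ` {u. 0 \<le> u \<and> u \<le> 1}"
  let ?h = "\<lambda>p::real \<times> 'n \<times> 'n. fst p *\<^sub>R fst (snd p) + (1 - fst p) *\<^sub>R snd (snd p)"
  have h0: "?h ` (?R \<times> (KK f \<times> KK f)) \<subseteq> closure (KK f)"
    using KK_ratconvex closure_subset by fastforce
  have "?h ` closure (?R \<times> (KK f \<times> KK f)) \<subseteq> closure (KK f)"
  proof (rule image_closure_subset[OF _ closed_closure h0])
    have "continuous_on UNIV ?h" by (intro continuous_intros)
    then show "continuous_on (closure (?R \<times> (KK f \<times> KK f))) ?h"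
      by (rule continuous_on_subset) simp
  qed
  hence *: "?h ` (closure ?R \<times> (closure (KK f) \<times> closure (KK f))) \<subseteq> closure (KK f)"
    by (simp add: closure_Times)
  show ?thesis unfolding convex_alt
  proof (intro ballI allI impI)
    fix a b and u :: real assume ab: "a \<in> closure (KK f)" "b \<in> closure (KK f)" and u: "0 \<le> u \<and> u \<le> 1"
    have "1 - u \<in> closure ?R" using u by (intro rat01_closure) auto
    then have "?h (1-u, a, b) \<in> closure (KK f)" using * ab by blast
    then show "(1 - u) *\<^sub>R a + u *\<^sub>R b \<in> closure (KK f)" by simp
  qed
qed

lemma cp_facts:
  fixes C :: "'n::euclidean_space set"
  assumes "closed C" "convex C" "C \<noteq> {}" "c \<in> C"
  shows "inner (a - closest_point C a) (c - closest_point C a) \<le> 0"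
    and "(dist c (closest_point C a))^2 \<le> (dist a c)^2 - (dist a (closest_point C a))^2"
proof -
  let ?p = "closest_point C a"
  show i: "inner (a - ?p) (c - ?p) \<le> 0"
    using any_closest_point_dot[OF assms(2,1) closest_point_in_set[OF assms(1,3)] assms(4)]
      closest_point_exists(2)[OF assms(1,3)] by blast
  have "(dist a c)^2 = (norm ((a - ?p) - (c - ?p)))^2" by (simp add: dist_norm)
  also have "\<dots> = (norm (a - ?p))^2 + (norm (c - ?p))^2 - 2 * inner (a - ?p) (c - ?p)"
    by (simp add: power2_norm_eq_inner inner_diff_left inner_diff_right inner_commute)
  finally show "(dist c ?p)^2 \<le> (dist a c)^2 - (dist a ?p)^2"
    using i by (simp add: dist_norm)
qed

lemma infdist_cp:
  fixes K :: "'n::euclidean_space set"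
  assumes "K \<noteq> {}"
  shows "infdist a K = dist a (closest_point (closure K) a)"
proof -
  let ?p = "closest_point (closure K) a"
  have ne: "closure K \<noteq> {}" using assms by simp
  have pin: "?p \<in> closure K" using closest_point_in_set[OF closed_closure ne] .
  have "dist a ?p \<le> infdist a K"
    unfolding infdist_def using assms
    by (auto intro!: cINF_greatest closest_point_le closure_subset[THEN subsetD])
  moreover have "infdist a K \<le> dist a ?p"
  proof (rule field_le_epsilon)
    fix e :: real assume e: "e > 0"
    obtain c where c: "c \<in> K" "dist c ?p < e" using pin e unfolding closure_approachable by blast
    have "infdist a K \<le> dist a c" by (rule infdist_le[OF c(1)])
    also have "\<dots> \<le> dist a ?p + dist c ?p" by (rule dist_triangle2)
    finally show "infdist a K \<le> dist a ?p + e" using c by simp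
  qed
  ultimately show ?thesis by simp
qed

lemma qlim_gen:
  fixes q :: "nat \<Rightarrow> 'n::euclidean_space" and K :: "'n set"
  assumes C: "closed (closure K)" "convex (closure K)" "closure K \<noteq> {}"
   and qK: "\<And>m. q m \<in> K" and qd: "\<And>m. dist a (q m) < d + inverse (real (Suc m))"
   and dd_p: "d = dist a (closest_point (closure K) a)"
  shows "q \<longlonglongrightarrow> closest_point (closure K) a"
proof -
  let ?p = "closest_point (closure K) a"
    have b: "norm (dist (q m) ?p) \<le> sqrt ((d + inverse (real (Suc m)))^2 - d^2)" for m
    proof -
      have "(dist (q m) ?p)^2 \<le> (dist a (q m))^2 - (dist a ?p)^2"
        by (rule cp_facts(2)[OF C closure_subset[THEN subsetD, OF qK]])
      also have "\<dots> \<le> (d + inverse (real (Suc m)))^2 - d^2"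
      proof -
        have "dist a (q m) \<le> d + inverse (real (Suc m))"
          using qd[of m] by (rule less_imp_le)
        then have "(dist a (q m))^2 \<le> (d + inverse (real (Suc m)))^2"
          by (rule power_mono) simp
        then show ?thesis using dd_p by simp
      qed
      finally have "dist (q m) ?p \<le> sqrt ((d + inverse (real (Suc m)))^2 - d^2)"
        by (rule real_le_rsqrt)
      then show ?thesis by simp
    qed
    have "(\<lambda>m. sqrt ((d + inverse (real (Suc m)))^2 - d^2)) \<longlonglongrightarrow> sqrt ((d + 0)^2 - d^2)"
      by (intro tendsto_intros LIMSEQ_inverse_real_of_nat)
    hence t0: "(\<lambda>m. sqrt ((d + inverse (real (Suc m)))^2 - d^2)) \<longlonglongrightarrow> 0" by simp
    have ev: "eventually (\<lambda>m. norm (dist (q m) ?p) \<le> sqrt ((d + inverse (real (Suc m)))^2 - d^2)) sequentially"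
      by (intro always_eventually allI b)
    have "(\<lambda>m. dist (q m) ?p) \<longlonglongrightarrow> 0"
      by (rule Lim_null_comparison[OF ev t0])
    then show ?thesis by (rule iffD2[OF tendsto_dist_iff])
qed
lemma weak_pointwise:
  fixes M :: "'a measure" and ys :: "nat \<Rightarrow> 'a \<Rightarrow> 'n::euclidean_space" and y :: "'a \<Rightarrow> 'n"
  assumes meas: "\<And>k. ys k \<in> borel_measurable M"
    and wc: "weak_L1_conv M ys y"
  shows "AE t in M. y t \<in> closure (KK (\<lambda>i. ys (N+i) t))"
proof -
  from wc have int_ys: "\<And>k. integrable M (ys k)" and int_y: "integrable M y"
    and lim: "\<And>\<phi>. \<phi> \<in> L1_dual M \<Longrightarrow> (\<lambda>k. \<phi> (ys k)) \<longlonglongrightarrow> \<phi> y"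
    by (auto simp: weak_L1_conv_def)
  have ymeas[measurable]: "y \<in> borel_measurable M" using int_y by auto
  note meas[measurable]
  define gg where "gg t = (\<lambda>i. ys (N+i) t)" for t
  define dd where "dd t = (INF ls\<in>Lw. dist (y t) (cw ls (gg t)))" for t
  have cwm[measurable]: "(\<lambda>t. cw ls (gg t)) \<in> borel_measurable M" for ls
    unfolding cw_def gg_def by measurable
  have cLw: "countable Lw" by (rule countable_subset[OF subset_UNIV]) simp
  have ddm[measurable]: "dd \<in> borel_measurable M"
    unfolding dd_def by (rule borel_measurable_cINF_real[OF cLw]) measurable
  have dd_inf: "dd t = infdist (y t) (KK (gg t))" for t
  proof -
    have "KK (gg t) \<noteq> {}" by (rule KK_ne)
    then show ?thesis unfolding dd_def infdist_def by (simp add: KK_def image_image)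
  qed
  define p where "p t = closest_point (closure (KK (gg t))) (y t)" for t
  have dd_p: "dd t = dist (y t) (p t)" for t using infdist_cp[OF KK_ne] dd_inf p_def by simp
  have dd_nn: "0 \<le> dd t" for t using dd_p by simp
  have C: "closed (closure (KK (gg t)))" "convex (closure (KK (gg t)))" "closure (KK (gg t)) \<noteq> {}" for t
    using KK_closure_convex KK_ne by auto
  define P where "P m i t \<longleftrightarrow> (from_nat i :: rat list) \<in> Lw \<and>
      dist (y t) (cw (from_nat i) (gg t)) < dd t + inverse (real (Suc m))" for m i t
  have Pm[measurable]: "Measurable.pred M (P m i)" for m i unfolding P_def by measurable
  have Pex: "\<exists>i. P m i t" for m t
  proof -
    have "(INF ls\<in>Lw. dist (y t) (cw ls (gg t))) < dd t + inverse (real (Suc m))"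
      using dd_def by simp
    moreover have "Lw \<noteq> {}" using KK_ne unfolding KK_def by blast
    ultimately obtain ls where "ls \<in> Lw" "dist (y t) (cw ls (gg t)) < dd t + inverse (real (Suc m))"
      using cINF_less_iff[of Lw "\<lambda>ls. dist (y t) (cw ls (gg t))"] bdd_belowI2[of Lw 0 "\<lambda>ls. dist (y t) (cw ls (gg t))"]
      by auto
    then show ?thesis unfolding P_def by (intro exI[of _ "to_nat ls"]) simp
  qed
  define q where "q m t = cw (from_nat (LEAST i. P m i t) :: rat list) (gg t)" for m t
  have qm[measurable]: "q m \<in> borel_measurable M" for m
    unfolding q_def
    by (rule measurable_compose_countable[where f="\<lambda>i t. cw (from_nat i :: rat list) (gg t)" and g="\<lambda>t. LEAST i. P m i t"])
       measurable
  have qP: "P m (LEAST i. P m i t) t" for m t using LeastI_ex[OF Pex] .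
  have qK: "q m t \<in> KK (gg t)" and qd: "dist (y t) (q m t) < dd t + inverse (real (Suc m))" for m t
    using qP[where m=m and t=t] unfolding P_def q_def KK_def by auto
  have qlim: "(\<lambda>m. q m t) \<longlonglongrightarrow> p t" for t
    unfolding p_def
    by (rule qlim_gen[OF C qK qd]) (use dd_p p_def in simp)
  have pm[measurable]: "p \<in> borel_measurable M"
    by (rule borel_measurable_LIMSEQ_metric[of q]) (auto intro: qlim)
  define w where "w t = inverse (1 + dd t) *\<^sub>R (y t - p t)" for t
  have wm[measurable]: "w \<in> borel_measurable M" unfolding w_def by measurable
  have nw: "norm (w t) \<le> 1" for t
  proof -
    have "norm (w t) = dd t / (1 + dd t)" using dd_p[of t] dd_nn[of t]
      by (simp add: w_def dist_norm divide_inverse mult.commute)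
    also have "\<dots> \<le> 1" using dd_nn[of t] by simp
    finally show ?thesis .
  qed
  define G where "G t = (dd t)^2 / (1 + dd t)" for t
  have Gm[measurable]: "G \<in> borel_measurable M" unfolding G_def by measurable
  have G_nn: "0 \<le> G t" for t using dd_nn[of t] by (simp add: G_def)
  have key: "inner (w t) (ys (N+k) t) \<le> inner (w t) (y t) - G t" for k t
  proof -
    have c: "ys (N+k) t \<in> closure (KK (gg t))"
      using KK_unit[of "gg t" k] closure_subset unfolding gg_def by auto
    have "inner (y t - p t) (ys (N+k) t - p t) \<le> 0" using cp_facts(1)[OF C c] p_def by simp
    moreover have "(dd t)^2 = inner (y t - p t) (y t - p t)"
      using dd_p[of t] by (simp add: dist_norm power2_norm_eq_inner)
    ultimately have *: "inner (y t - p t) (ys (N+k) t) \<le> inner (y t - p t) (y t) - (dd t)^2"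
      by (simp add: inner_diff_right)
    have pos: "0 < inverse (1 + dd t)" using dd_nn[of t] by simp
    have "inverse (1 + dd t) * inner (y t - p t) (ys (N+k) t)
          \<le> inverse (1 + dd t) * (inner (y t - p t) (y t) - (dd t)^2)"
      using mult_left_mono[OF * less_imp_le[OF pos]] .
    then show ?thesis
      by (simp add: w_def G_def right_diff_distrib divide_inverse mult.commute)
  qed
  define \<phi> where "\<phi> f = (\<integral>t. inner (w t) (f t) \<partial>M)" for f :: "'a \<Rightarrow> 'n"
  have intw: "integrable M (\<lambda>t. inner (w t) (f t))" if f: "integrable M f" for f
  proof (rule Bochner_Integration.integrable_bound[OF integrable_norm[OF f]])
    have [measurable]: "f \<in> borel_measurable M" using f by auto
    show "(\<lambda>t. inner (w t) (f t)) \<in> borel_measurable M" by measurable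
    show "AE x in M. norm (inner (w x) (f x)) \<le> norm (norm (f x))"
    proof (rule AE_I2)
      fix x
      have "norm (inner (w x) (f x)) \<le> norm (w x) * norm (f x)"
        using Cauchy_Schwarz_ineq2 by simp
      also have "\<dots> \<le> norm (f x)" using nw[of x] by (simp add: mult_left_le_one_le)
      finally show "norm (inner (w x) (f x)) \<le> norm (norm (f x))" by simp
    qed
  qed
  have phiD: "\<phi> \<in> L1_dual M"
    unfolding L1_dual_def
  proof (intro CollectI conjI allI impI)
    fix f g :: "'a \<Rightarrow> 'n" assume f: "integrable M f" and g: "integrable M g"
    show "\<phi> (\<lambda>t. f t + g t) = \<phi> f + \<phi> g"
      unfolding \<phi>_def inner_add_right using intw[OF f] intw[OF g] by simp
  next
    fix c and f :: "'a \<Rightarrow> 'n" assume f: "integrable M f"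
    show "\<phi> (\<lambda>t. c *\<^sub>R f t) = c * \<phi> f"
      unfolding \<phi>_def inner_scaleR_right by simp
  next
    show "\<exists>C. \<forall>f. integrable M f \<longrightarrow> \<bar>\<phi> f\<bar> \<le> C * (\<integral>t. norm (f t) \<partial>M)"
    proof (intro exI[of _ 1] allI impI)
      fix f :: "'a \<Rightarrow> 'n" assume f: "integrable M f"
      have "\<bar>\<phi> f\<bar> \<le> (\<integral>t. norm (inner (w t) (f t)) \<partial>M)"
        unfolding \<phi>_def using integral_norm_bound[of M "\<lambda>t. inner (w t) (f t)"] by simp
      also have "\<dots> \<le> (\<integral>t. norm (f t) \<partial>M)"
      proof (rule integral_mono)
        show "integrable M (\<lambda>t. norm (inner (w t) (f t)))" using intw[OF f] by simp
        show "integrable M (\<lambda>t. norm (f t))" using f by simp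
        fix t
        have "norm (inner (w t) (f t)) \<le> norm (w t) * norm (f t)"
          using Cauchy_Schwarz_ineq2 by simp
        also have "\<dots> \<le> norm (f t)" using nw[of t] by (simp add: mult_left_le_one_le)
        finally show "norm (inner (w t) (f t)) \<le> norm (f t)" .
      qed
      finally show "\<bar>\<phi> f\<bar> \<le> 1 * (\<integral>t. norm (f t) \<partial>M)" by simp
    qed
  qed
  have intG: "integrable M G"
  proof (rule Bochner_Integration.integrable_bound[of M "\<lambda>t. y t - ys N t"])
    show "integrable M (\<lambda>t. y t - ys N t)" using int_y int_ys[of N] by simp
    show "G \<in> borel_measurable M" by measurable
    show "AE x in M. norm (G x) \<le> norm (y x - ys N x)"
    proof (rule AE_I2)
      fix t
      have "G t \<le> dd t"
        using dd_nn[of t] by (simp add: G_def divide_le_eq power2_eq_square algebra_simps)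
      also have "dd t \<le> dist (y t) (ys N t)"
        unfolding dd_inf using infdist_le[OF KK_unit[of "gg t" 0]] by (simp add: gg_def)
      finally show "norm (G t) \<le> norm (y t - ys N t)" using G_nn[of t] by (simp add: dist_norm)
    qed
  qed
  have le: "\<phi> (ys (N+k)) \<le> \<phi> y - integral\<^sup>L M G" for k
  proof -
    have "\<phi> (ys (N+k)) \<le> (\<integral>t. inner (w t) (y t) - G t \<partial>M)"
      unfolding \<phi>_def
      by (rule integral_mono[OF intw[OF int_ys] Bochner_Integration.integrable_diff[OF intw[OF int_y] intG] key])
    also have "\<dots> = \<phi> y - integral\<^sup>L M G"
      unfolding \<phi>_def using intw[OF int_y] intG by simp
    finally show ?thesis .
  qed
  have "\<phi> y \<le> \<phi> y - integral\<^sup>L M G"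
  proof (rule LIMSEQ_le_const2[OF lim[OF phiD]])
    show "\<exists>N'. \<forall>n\<ge>N'. \<phi> (ys n) \<le> \<phi> y - integral\<^sup>L M G"
      using le by (intro exI[of _ N]) (metis le_add_diff_inverse)
  qed
  then have "integral\<^sup>L M G \<le> 0" by simp
  moreover have "0 \<le> integral\<^sup>L M G" using G_nn by simp
  ultimately have "integral\<^sup>L M G = 0" by simp
  then have "AE t in M. G t = 0" using integral_nonneg_eq_0_iff_AE[OF intG] G_nn by simp
  then show ?thesis
  proof (rule AE_mp, intro AE_I2 impI)
    fix t assume "G t = 0"
    then have "dd t = 0" using dd_nn[of t] by (simp add: G_def add_nonneg_eq_0_iff)
    then show "y t \<in> closure (KK (\<lambda>i. ys (N + i) t))"
    proof -
      have "infdist (y t) (KK (gg t)) = 0" using \<open>dd t = 0\<close> dd_inf[of t] by simp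
      then show ?thesis using in_closure_iff_infdist_zero[OF KK_ne, of "y t" "gg t"] unfolding gg_def by blast
    qed
  qed
qed


theorem theorem4p9:
  fixes M :: "'a measure"
    and F :: "'m::euclidean_space \<Rightarrow> 'n::euclidean_space set"
    and xs :: "nat \<Rightarrow> 'a \<Rightarrow> 'm" and x :: "'a \<Rightarrow> 'm"
    and ys :: "nat \<Rightarrow> 'a \<Rightarrow> 'n" and y :: "'a \<Rightarrow> 'n"
  assumes "\<And>k. xs k \<in> borel_measurable M"
    and "\<And>k. ys k \<in> borel_measurable M"
    and "AE t in M. (\<lambda>k. xs k t) \<longlonglongrightarrow> x t"
    and "weak_L1_conv M ys y"
    and "\<And>k. AE t in M. ys k t \<in> F (xs k t)"
  shows "AE t in M. y t \<in> conv_inf F (x t)"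
proof -
  have AEp: "AE t in M. \<forall>N. y t \<in> closure (KK (\<lambda>i. ys (N+i) t))"
    by (subst AE_all_countable) (auto intro: weak_pointwise[OF assms(2,4)])
  have AEF: "AE t in M. \<forall>k. ys k t \<in> F (xs k t)"
    by (subst AE_all_countable) (auto intro: assms(5))
  show ?thesis
    using AEp AEF assms(3)
  proof (eventually_elim)
    case (elim t)
    note Pt = elim(1) and Ft = elim(2) and lim = elim(3)
    define A where "A j = convex hull (\<Union> (F ` ball (x t) (1 / real (Suc j))))" for j
    have cl: "y t \<in> closure (A j)" for j
    proof -
      have "(0::real) < 1 / real (Suc j)" by simp
      then obtain N where N: "\<And>k. k \<ge> N \<Longrightarrow> dist (xs k t) (x t) < 1 / real (Suc j)"
        using lim unfolding lim_sequentially by blast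
      have "range (\<lambda>i. ys (N+i) t) \<subseteq> \<Union> (F ` ball (x t) (1 / real (Suc j)))"
      proof clarify
        fix i
        have "xs (N+i) t \<in> ball (x t) (1 / real (Suc j))"
          using N[of "N+i"] by (simp add: dist_commute)
        then show "ys (N+i) t \<in> \<Union> (F ` ball (x t) (1 / real (Suc j)))" using Ft by blast
      qed
      then have "KK (\<lambda>i. ys (N+i) t) \<subseteq> A j"
        unfolding A_def using KK_hull hull_mono by blast
      then show ?thesis using Pt closure_mono by blast
    qed
    have "\<forall>j. \<exists>z. z \<in> A j \<and> dist z (y t) < 1 / real (Suc j)"
    proof
      fix j
      have "(0::real) < 1 / real (Suc j)" by simp
      then show "\<exists>z. z \<in> A j \<and> dist z (y t) < 1 / real (Suc j)"
        using cl[of j] unfolding closure_approachable by blast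
    qed
    then obtain z where z: "\<And>j. z j \<in> A j" "\<And>j. dist (z j) (y t) < 1 / real (Suc j)"
      by metis
    have "z \<longlonglongrightarrow> y t"
      unfolding lim_sequentially
    proof (intro allI impI)
      fix r :: real assume r: "0 < r"
      obtain n0 where n0: "inverse (real (Suc n0)) < r" using reals_Archimedean[OF r] by blast
      have "dist (z n) (y t) < r" if "n \<ge> n0" for n
      proof -
        have i: "inverse (real (Suc n)) \<le> inverse (real (Suc n0))"
          by (rule le_imp_inverse_le) (use that in simp_all)
        have "dist (z n) (y t) < inverse (real (Suc n))" using z(2)[of n] by (simp add: divide_inverse)
        then show ?thesis using i n0 by linarith
      qed
      then show "\<exists>no. \<forall>n\<ge>no. dist (z n) (y t) < r" by blast
    qed
    then show "y t \<in> conv_inf F (x t)"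
      unfolding conv_inf_def outer_limit_def
      using z(1) strict_mono_id unfolding A_def by (intro CollectI exI[of _ id] exI[of _ z]) auto
  qed
qed

end
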